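(* Let $E$ be a real vector space and $F$ a non-degenerate real vector space. Let $r\ge 1$ and let $A,B:E^r\to F$ be symmetric $r$-linear maps. If the function $f_A-f_B:E\to F$ is constant on some subset $U\subseteq E$ with $\mathrm{Star}^r(U,E)\neq\emptyset$, then $A=B$.
   Context: No topology is assumed on $E$ or $F$, and $A,B$ need not be continuous. For a symmetric $r$-linear map $A:E^r\to F$, its monomial function is $f_A:E\to F$, $f_A(x)=A(x,x,\dots,x)$. A real vector space $F$ is called non-degenerate if for every nonzero $v\in F$ there is a linear functional $\lambda:F\to\mathbb R$ with $\lambda(v)\neq 0$. For $U\subseteq E$, $\mathrm{Star}(U,E)$ is the set of $v\in U$ such that for every $w\in E$ there is $\delta_w>0$ with $v+tw\in U$ whenever $|t|\le\delta_w$. Set $\mathrm{Star}^1(U,E)=\mathrm{Star}(U,E)$ and $\mathrm{Star}^r(U,E)=\mathrm{Star}^{r-1}(\mathrm{Star}(U,E),E)$. *)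

theory Defs
  imports Complex_Main "HOL-Library.Multiset"
begin

text \<open>Maps E^r -> F are represented as functions on lists; only lists of length r matter.\<close>

definition multilinear_on :: "nat \<Rightarrow> ('a::real_vector list \<Rightarrow> 'b::real_vector) \<Rightarrow> bool" where
  "multilinear_on r A \<longleftrightarrow>
     (\<forall>xs i. length xs = r \<longrightarrow> i < r \<longrightarrow> linear (\<lambda>v. A (xs[i := v])))"

definition symmetric_on :: "nat \<Rightarrow> ('a list \<Rightarrow> 'b) \<Rightarrow> bool" where
  "symmetric_on r A \<longleftrightarrow>
     (\<forall>xs ys. length xs = r \<longrightarrow> mset ys = mset xs \<longrightarrow> A ys = A xs)"

definition sym_multilinear :: "nat \<Rightarrow> ('a::real_vector list \<Rightarrow> 'b::real_vector) \<Rightarrow> bool" where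
  "sym_multilinear r A \<longleftrightarrow> multilinear_on r A \<and> symmetric_on r A"

definition monomial_fun :: "nat \<Rightarrow> ('a list \<Rightarrow> 'b) \<Rightarrow> 'a \<Rightarrow> 'b" where
  "monomial_fun r A x = A (replicate r x)"

definition nondegenerate :: "'b::real_vector itself \<Rightarrow> bool" where
  "nondegenerate _ \<longleftrightarrow>
     (\<forall>v::'b. v \<noteq> 0 \<longrightarrow> (\<exists>l::'b \<Rightarrow> real. linear l \<and> l v \<noteq> 0))"

definition Star :: "'a::real_vector set \<Rightarrow> 'a set" where
  "Star U = {v \<in> U. \<forall>w. \<exists>\<delta>>0. \<forall>t::real. \<bar>t\<bar> \<le> \<delta> \<longrightarrow> v + t *\<^sub>R w \<in> U}"

definition Star_pow :: "nat \<Rightarrow> 'a::real_vector set \<Rightarrow> 'a set" where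
  "Star_pow r U = (Star ^^ r) U"

end

theory Submission imports Defs begin

lemma poly_vanish:
  fixes c :: "nat \<Rightarrow> 'b::real_vector"
  assumes nd: "nondegenerate TYPE('b)" and d: "\<delta> > 0"
    and h: "\<And>t. \<bar>t\<bar> \<le> \<delta> \<Longrightarrow> (\<Sum>k\<le>n. t^k *\<^sub>R c k) = dd"
    and k: "1 \<le> k" "k \<le> n"
  shows "c k = 0"
proof (rule ccontr)
  assume "c k \<noteq> 0"
  then obtain l :: "'b \<Rightarrow> real" where l: "linear l" "l (c k) \<noteq> 0"
    using nd unfolding nondegenerate_def by blast
  define e where "e i = (if i = 0 then l (c 0) - l dd else l (c i))" for i
  have "{-\<delta>..\<delta>} \<subseteq> {x. (\<Sum>i\<le>n. e i * x^i) = 0}"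
  proof
    fix t assume "t \<in> {-\<delta>..\<delta>}"
    then have "\<bar>t\<bar> \<le> \<delta>" by auto
    then have "l (\<Sum>k\<le>n. t^k *\<^sub>R c k) = l dd" using h by simp
    then have "(\<Sum>i\<le>n. t^i * l (c i)) = l dd"
      using l(1) by (simp add: linear_sum linear_scale)
    moreover have "(\<Sum>i\<le>n. e i * t^i) = (\<Sum>i\<le>n. t^i * l (c i)) - l dd"
    proof -
      have "(\<Sum>i\<le>n. e i * t^i) = (\<Sum>i\<le>n. t^i * l (c i) - (if i = 0 then l dd else 0))"
        by (rule sum.cong) (auto simp: e_def algebra_simps)
      also have "\<dots> = (\<Sum>i\<le>n. t^i * l (c i)) - l dd"
        by (simp add: sum_subtractf)
      finally show ?thesis .
    qed
    ultimately show "t \<in> {x. (\<Sum>i\<le>n. e i * x^i) = 0}" by simp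
  qed
  moreover have "infinite {-\<delta>..\<delta>}" using d by simp
  ultimately have "infinite {x::real. (\<Sum>i\<le>n. e i * x^i) = 0}"
    using finite_subset by blast
  then have "\<forall>i\<le>n. e i = 0" using polyfun_finite_roots by blast
  then show False using k l(2) by (auto simp: e_def)
qed


lemma ml_split:
  assumes "multilinear_on r C" "length xs = r" "i < r"
  shows "C (xs[i := a + t *\<^sub>R b]) = C (xs[i := a]) + t *\<^sub>R C (xs[i := b])"
proof -
  have lin: "linear (\<lambda>v. C (xs[i := v]))" using assms unfolding multilinear_on_def by blast
  show ?thesis using real_vector.linear_add[OF lin] real_vector.linear_scale[OF lin] by simp
qed

definition W :: "nat \<Rightarrow> real \<Rightarrow> 'a::real_vector list \<Rightarrow> 'a list \<Rightarrow> 'a list" where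
  "W m t qs ps = map (\<lambda>i. if i < m then ps!i + t *\<^sub>R qs!i else ps!i) [0..<length ps]"

lemma expansion:
  assumes ml: "multilinear_on r C" and lq: "length qs = r"
  shows "m \<le> r \<Longrightarrow> length ps = r \<Longrightarrow> \<exists>c. (\<forall>t. C (W m t qs ps) = (\<Sum>k\<le>m. t^k *\<^sub>R c k))
      \<and> c 0 = C ps \<and> c 1 = (\<Sum>i<m. C (ps[i := qs!i]))
      \<and> c m = C (map (\<lambda>i. if i < m then qs!i else ps!i) [0..<r])"
proof (induction m arbitrary: ps)
  case 0
  have e: "map (\<lambda>i. ps!i) [0..<r] = ps" using 0 map_nth[of ps] by (metis (no_types) 0)
  show ?case
    by (rule exI[of _ "\<lambda>k. if k = 0 then C ps else 0"]) (simp add: W_def e 0 map_nth)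
next
  case (Suc m)
  define ps' where "ps' = ps[m := qs!m]"
  have mr: "m < r" using Suc by simp
  have lps': "length ps' = r" using Suc by (simp add: ps'_def)
  obtain c1 where c1: "\<forall>t. C (W m t qs ps) = (\<Sum>k\<le>m. t^k *\<^sub>R c1 k)" "c1 0 = C ps"
     "c1 1 = (\<Sum>i<m. C (ps[i := qs!i]))" "c1 m = C (map (\<lambda>i. if i < m then qs!i else ps!i) [0..<r])"
    using Suc.IH[of ps] Suc.prems by auto
  obtain c2 where c2: "\<forall>t. C (W m t qs ps') = (\<Sum>k\<le>m. t^k *\<^sub>R c2 k)" "c2 0 = C ps'"
     "c2 m = C (map (\<lambda>i. if i < m then qs!i else ps'!i) [0..<r])"
    using Suc.IH[of ps'] Suc.prems lps' by auto
  define c where "c k = (if k \<le> m then c1 k else 0) + (if k = 0 then 0 else c2 (k - 1))" for k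
  have lW: "length (W m t qs ps) = r" for t using Suc.prems by (simp add: W_def)
  have W1: "W (Suc m) t qs ps = (W m t qs ps)[m := ps!m + t *\<^sub>R qs!m]" for t
    using Suc.prems by (auto simp: W_def nth_list_update less_Suc_eq intro!: nth_equalityI)
  have W2: "(W m t qs ps)[m := ps!m] = W m t qs ps" for t
    using Suc.prems by (auto simp: W_def nth_list_update intro!: nth_equalityI)
  have W3: "(W m t qs ps)[m := qs!m] = W m t qs ps'" for t
    using Suc.prems by (auto simp: W_def ps'_def nth_list_update intro!: nth_equalityI)
  have val: "C (W (Suc m) t qs ps) = C (W m t qs ps) + t *\<^sub>R C (W m t qs ps')" for t
    using ml_split[OF ml lW mr] W1 W2 W3 by simp
  have sum: "(\<Sum>k\<le>Suc m. t^k *\<^sub>R c k) = (\<Sum>k\<le>m. t^k *\<^sub>R c1 k) + t *\<^sub>R (\<Sum>k\<le>m. t^k *\<^sub>R c2 k)" for t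
  proof -
    have "(\<Sum>k\<le>Suc m. t^k *\<^sub>R c k) = (\<Sum>k\<le>Suc m. t^k *\<^sub>R (if k \<le> m then c1 k else 0))
        + (\<Sum>k\<le>Suc m. t^k *\<^sub>R (if k = 0 then 0 else c2 (k - 1)))"
      by (simp add: c_def scaleR_add_right sum.distrib)
    also have "(\<Sum>k\<le>Suc m. t^k *\<^sub>R (if k \<le> m then c1 k else 0)) = (\<Sum>k\<le>m. t^k *\<^sub>R c1 k)"
      by simp
    also have "(\<Sum>k\<le>Suc m. t^k *\<^sub>R (if k = 0 then 0 else c2 (k - 1))) = (\<Sum>k\<le>m. t^Suc k *\<^sub>R c2 k)"
      by (subst sum.atMost_Suc_shift) simp
    also have "\<dots> = t *\<^sub>R (\<Sum>k\<le>m. t^k *\<^sub>R c2 k)"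
      by (simp add: scaleR_sum_right)
    finally show ?thesis .
  qed
  show ?case
  proof (intro exI[of _ c] conjI allI)
    fix t show "C (W (Suc m) t qs ps) = (\<Sum>k\<le>Suc m. t^k *\<^sub>R c k)"
      using val sum c1(1) c2(1) by simp
  next
    show "c 0 = C ps" using c1 by (simp add: c_def)
  next
    show "c 1 = (\<Sum>i<Suc m. C (ps[i := qs!i]))"
      using c1 c2 by (cases m) (auto simp: c_def ps'_def)
  next
    have "map (\<lambda>i. if i < m then qs!i else ps'!i) [0..<r] = map (\<lambda>i. if i < Suc m then qs!i else ps!i) [0..<r]"
      using Suc.prems by (auto simp: ps'_def nth_list_update less_Suc_eq)
    then show "c (Suc m) = C (map (\<lambda>i. if i < Suc m then qs!i else ps!i) [0..<r])"
    proof -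
      assume eq: "map (\<lambda>i. if i < m then qs!i else ps'!i) [0..<r] = map (\<lambda>i. if i < Suc m then qs!i else ps!i) [0..<r]"
      have "c (Suc m) = c2 m" by (simp add: c_def)
      also have "\<dots> = C (map (\<lambda>i. if i < m then qs!i else ps'!i) [0..<r])" by (rule c2(3))
      also have "\<dots> = C (map (\<lambda>i. if i < Suc m then qs!i else ps!i) [0..<r])" using eq by (rule arg_cong)
      finally show ?thesis .
    qed
  qed
qed


lemma expansion_rep:
  assumes ml: "multilinear_on r C" and sy: "symmetric_on r C" and r: "r \<ge> 1"
  shows "\<exists>c. (\<forall>t. C (replicate r (x + t *\<^sub>R y)) = (\<Sum>k\<le>r. t^k *\<^sub>R c k))
      \<and> c 1 = real r *\<^sub>R C (y # replicate (r - 1) x) \<and> c r = C (replicate r y)"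
proof -
  obtain c where c: "\<forall>t. C (W r t (replicate r y) (replicate r x)) = (\<Sum>k\<le>r. t^k *\<^sub>R c k)"
      "c 1 = (\<Sum>i<r. C ((replicate r x)[i := replicate r y!i]))"
      "c r = C (map (\<lambda>i. if i < r then replicate r y!i else replicate r x!i) [0..<r])"
    using expansion[OF ml, of "replicate r y" r "replicate r x"] by auto
  have e1: "W r t (replicate r y) (replicate r x) = replicate r (x + t *\<^sub>R y)" for t
    by (auto simp: W_def intro!: nth_equalityI)
  have e2: "map (\<lambda>i. if i < r then replicate r y!i else replicate r x!i) [0..<r] = replicate r y"
    by (auto intro!: nth_equalityI)
  have e3: "C ((replicate r x)[i := replicate r y!i]) = C (y # replicate (r - 1) x)" if ir: "i < r" for i
  proof -
    have "mset ((replicate r x)[i := replicate r y!i]) = mset (y # replicate (r - 1) x)"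
    proof -
      have "replicate r y ! i = y" using that by simp
      moreover have "mset ((replicate r x)[i := y]) = add_mset y (mset (replicate r x) - {#replicate r x ! i#})"
        using that by (intro mset_update) simp
      moreover have "replicate r x ! i = x" using ir by simp
      moreover have "mset (replicate r x) - {#x#} = replicate_mset (r - 1) x"
        using ir by (cases r) auto
      ultimately show ?thesis by simp
    qed
    then show ?thesis using sy r unfolding symmetric_on_def
      by (metis One_nat_def Suc_pred length_Cons length_replicate less_le_trans zero_less_one)
  qed
  have "c 1 = real r *\<^sub>R C (y # replicate (r - 1) x)"
    using c(2) e3 by (simp add: sum_constant_scaleR)
  then show ?thesis using c e1 e2 by auto
qed


lemma sym_ml_sub:
  fixes A B :: "'a::real_vector list \<Rightarrow> 'b::real_vector"
  assumes a: "sym_multilinear r A" and b: "sym_multilinear r B"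
  shows "sym_multilinear r (\<lambda>xs. A xs - B xs)"
  unfolding sym_multilinear_def multilinear_on_def symmetric_on_def
proof (intro conjI allI impI)
  fix xs :: "'a list" and i assume h: "length xs = r" "i < r"
  have "linear (\<lambda>v. A (xs[i := v]))" using a h unfolding sym_multilinear_def multilinear_on_def by blast
  moreover have "linear (\<lambda>v. B (xs[i := v]))" using b h unfolding sym_multilinear_def multilinear_on_def by blast
  ultimately show "linear (\<lambda>v. A (xs[i := v]) - B (xs[i := v]))"
    by (rule real_vector.linear_compose_sub)
next
  fix xs ys :: "'a list" assume h: "length xs = r" "mset ys = mset xs"
  have "A ys = A xs" using a h unfolding sym_multilinear_def symmetric_on_def by blast
  moreover have "B ys = B xs" using b h unfolding sym_multilinear_def symmetric_on_def by blast
  ultimately show "A ys - B ys = A xs - B xs" by simp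
qed

lemma sym_ml_cons:
  fixes C :: "'a::real_vector list \<Rightarrow> 'b::real_vector"
  assumes "sym_multilinear (Suc n) C"
  shows "sym_multilinear n (\<lambda>zs. C (y # zs))"
  unfolding sym_multilinear_def multilinear_on_def symmetric_on_def
proof (intro conjI allI impI)
  fix xs :: "'a list" and i assume "length xs = n" "i < n"
  then have "linear (\<lambda>v. C ((y # xs)[Suc i := v]))"
    using assms unfolding sym_multilinear_def multilinear_on_def by (metis Suc_less_eq length_Cons)
  then show "linear (\<lambda>v. C (y # xs[i := v]))" by simp
next
  fix xs ys :: "'a list" assume "length xs = n" "mset ys = mset xs"
  then have "length (y # xs) = Suc n" "mset (y # ys) = mset (y # xs)" by auto
  then show "C (y # ys) = C (y # xs)"
    using assms unfolding sym_multilinear_def symmetric_on_def by blast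
qed

lemma polarization:
  assumes nd: "nondegenerate TYPE('b::real_vector)"
  shows "sym_multilinear (Suc n) (C :: 'a::real_vector list \<Rightarrow> 'b) \<Longrightarrow> (\<forall>w. C (replicate (Suc n) w) = 0)
     \<Longrightarrow> length xs = Suc n \<Longrightarrow> C xs = 0"
proof (induction n arbitrary: C xs)
  case 0
  then obtain w where "xs = [w]" by (cases xs) auto
  then show ?case using 0 by simp
next
  case (Suc n)
  obtain y zs where xs: "xs = y # zs" and lz: "length zs = Suc n" using Suc.prems by (cases xs) auto
  have "C (y # replicate (Suc n) x) = 0" for x
  proof -
    obtain c where c: "\<forall>t. C (replicate (Suc (Suc n)) (x + t *\<^sub>R y)) = (\<Sum>k\<le>Suc (Suc n). t^k *\<^sub>R c k)"
       "c 1 = real (Suc (Suc n)) *\<^sub>R C (y # replicate (Suc n) x)"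
      using expansion_rep[of "Suc (Suc n)" C x y] Suc.prems unfolding sym_multilinear_def by auto
    have "c 1 = 0"
      by (rule poly_vanish[OF nd, where \<delta>=1 and n="Suc (Suc n)" and c=c and dd=0 and k=1]) (use c(1) Suc.prems(2) in auto)
    then show ?thesis using c(2) by simp
  qed
  then have "\<forall>w. (\<lambda>zs. C (y # zs)) (replicate (Suc n) w) = 0" by simp
  then have "C (y # zs) = 0"
    using Suc.IH[OF sym_ml_cons[OF Suc.prems(1)]] lz by blast
  then show ?case using xs by simp
qed

lemma star_sub: "Star U \<subseteq> U" unfolding Star_def by auto

lemma star_pow_sub: "r \<ge> 1 \<Longrightarrow> Star_pow r U \<subseteq> Star U"
proof -
  assume "r \<ge> 1"
  then obtain n where r: "r = Suc n" by (cases r) auto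
  have "(Star ^^ n) V \<subseteq> V" for V :: "'a set"
    by (induction n) (use star_sub in auto)
  then show ?thesis unfolding Star_pow_def r funpow_Suc_right by simp
qed

theorem mainTheorem1:
  fixes A B :: "'a::real_vector list \<Rightarrow> 'b::real_vector"
    and U :: "'a set" and r :: nat
  assumes "nondegenerate TYPE('b)"
    and "r \<ge> 1"
    and "sym_multilinear r A" and "sym_multilinear r B"
    and "\<exists>c. \<forall>x\<in>U. monomial_fun r A x - monomial_fun r B x = c"
    and "Star_pow r U \<noteq> {}"
  shows "\<forall>xs. length xs = r \<longrightarrow> A xs = B xs"
proof -
  define C where "C xs = A xs - B xs" for xs
  have sC: "sym_multilinear r C" unfolding C_def using sym_ml_sub assms(3,4) by blast
  obtain d where d: "\<forall>x\<in>U. C (replicate r x) = d"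
    using assms(5) by (auto simp: C_def monomial_fun_def)
  obtain p where p: "p \<in> Star U" using assms(6) star_pow_sub[OF assms(2)] by blast
  obtain n where r: "r = Suc n" using assms(2) by (cases r) auto
  have diag: "C (replicate r w) = 0" for w
  proof -
    obtain \<delta> where \<delta>: "\<delta> > 0" "\<And>t. \<bar>t\<bar> \<le> \<delta> \<Longrightarrow> p + t *\<^sub>R w \<in> U"
      using p unfolding Star_def by blast
    obtain c where c: "\<forall>t. C (replicate r (p + t *\<^sub>R w)) = (\<Sum>k\<le>r. t^k *\<^sub>R c k)"
       "c r = C (replicate r w)"
      using expansion_rep[of r C p w] sC assms(2) unfolding sym_multilinear_def by auto
    have "c r = 0"
      by (rule poly_vanish[OF assms(1) \<delta>(1), where n=r and c=c and dd=d and k=r]) (use assms(2) in auto, metis c(1) \<delta>(2) d)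
    then show ?thesis using c(2) by simp
  qed
  have "C xs = 0" if "length xs = r" for xs
    using polarization[OF assms(1), of n C xs] sC diag that r by auto
  then show ?thesis by (auto simp: C_def)
qed

end
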